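(* Let $A,B,C$ be the observer canonical realization (described in the context) of a plant $b(s)/a(s)$ that is stable (i.e. $A$ is Hurwitz) and has positive DC gain. Then the first exit time $\tau_+(\xi)$ is finite for every $\xi\in\mathbb{R}^n$.
   Context: The plant transfer function is $\frac{b(s)}{a(s)}=\frac{b_{n-1}s^{n-1}+\dots+b_0}{s^n+a_{n-1}s^{n-1}+\dots+a_0}$ with real coefficients. Its observer canonical realization is: $A$ is the $n\times n$ matrix with $A_{i+1,i}=1$ for $i=1,\dots,n-1$, last column $(-a_0,-a_1,\dots,-a_{n-1})^T$, and all other entries zero; $B=(b_0,b_1,\dots,b_{n-1})^T$; $C=(0,\dots,0,1)$. The plant is stable if $A$ is Hurwitz; its DC gain is $b_0/a_0$. The first exit time from positive sign is $\tau_+(\xi)=\inf\{t>0: Cx(t)<0\}$, where $x(\cdot)$ solves $\dot x=Ax-B$, $x(0)=\xi$. *)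

theory Defs
  imports "HOL-Analysis.Analysis" "Jordan_Normal_Form.Char_Poly"
begin

(* Indices are 0-based: paper's index k corresponds to k-1 here.
   Coefficients a_0..a_{n-1}, b_0..b_{n-1} are given as functions nat => real. *)

definition obs_A :: "nat \<Rightarrow> (nat \<Rightarrow> real) \<Rightarrow> real mat" where
  "obs_A n a = mat n n (\<lambda>(i,j). if j = n - 1 then - a i else if i = j + 1 then 1 else 0)"

definition obs_B :: "nat \<Rightarrow> (nat \<Rightarrow> real) \<Rightarrow> real vec" where
  "obs_B n b = vec n b"

definition obs_C :: "nat \<Rightarrow> real vec" where
  "obs_C n = unit_vec n (n - 1)"

definition hurwitz :: "real mat \<Rightarrow> bool" where
  "hurwitz M \<longleftrightarrow> (\<forall>z. eigenvalue (map_mat complex_of_real M) z \<longrightarrow> Re z < 0)"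

definition is_solution :: "nat \<Rightarrow> real mat \<Rightarrow> real vec \<Rightarrow> real vec \<Rightarrow> (real \<Rightarrow> real vec) \<Rightarrow> bool" where
  "is_solution n A B \<xi> x \<longleftrightarrow> x 0 = \<xi> \<and> (\<forall>t\<ge>0. dim_vec (x t) = n) \<and>
     (\<forall>t\<ge>0. \<forall>i<n. ((\<lambda>s. x s $ i) has_real_derivative ((A *\<^sub>v x t) $ i - B $ i)) (at t within {0..}))"

(* first exit time from positive sign, as an extended real (= \<infinity> if the set is empty) *)
definition tau_plus :: "real vec \<Rightarrow> (real \<Rightarrow> real vec) \<Rightarrow> ereal" where
  "tau_plus C x = Inf {ereal t | t. t > 0 \<and> C \<bullet> x t < 0}"

end

theory Submission
  imports Defs "HOL-Computational_Algebra.Fundamental_Theorem_Algebra"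
begin

definition cpoly :: "nat \<Rightarrow> (nat \<Rightarrow> complex) \<Rightarrow> complex poly" where
  "cpoly n a = monom 1 n + (\<Sum>i<n. monom (a i) i)"

lemma coeff_cpoly: "coeff (cpoly n a) i = (if i = n then 1 else if i < n then a i else 0)"
  by (auto simp: cpoly_def coeff_sum)

lemma poly_cpoly: "poly (cpoly n a) x = x ^ n + (\<Sum>i<n. a i * x ^ i)"
  by (simp add: cpoly_def poly_sum poly_monom)

lemma degree_cpoly: "degree (cpoly n a) = n"
proof (rule antisym)
  show "degree (cpoly n a) \<le> n" by (rule degree_le) (auto simp: coeff_cpoly)
  show "n \<le> degree (cpoly n a)" by (rule le_degree) (simp add: coeff_cpoly)
qed

lemma cpoly_root_exists:
  assumes "n \<ge> 1" shows "\<exists>l. poly (cpoly n a) l = 0"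
proof (rule fundamental_theorem_of_algebra_alt, rule notI)
  assume "\<exists>c l. c \<noteq> 0 \<and> l = 0 \<and> cpoly n a = pCons c l"
  then have "degree (cpoly n a) = 0" by auto
  then show False using degree_cpoly[of n a] assms by simp
qed

lemma synth_facts:
  fixes P :: "complex poly"
  assumes "poly P l = 0"
  shows "coeff P 0 = - l * coeff (synthetic_div P l) 0"
    and "coeff P (Suc i) = coeff (synthetic_div P l) i - l * coeff (synthetic_div P l) (Suc i)"
    and "poly P x = (x - l) * poly (synthetic_div P l) x"
proof -
  have e: "P = [:-l, 1:] * synthetic_div P l"
    using synthetic_div_correct'[of l P] assms by simp
  have e2: "[:-l, 1:] * synthetic_div P l = Polynomial.smult (-l) (synthetic_div P l) + pCons 0 (synthetic_div P l)"
    by (simp add: mult_pCons_left)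
  show "coeff P 0 = - l * coeff (synthetic_div P l) 0"
    by (subst e, subst e2) simp
  show "coeff P (Suc i) = coeff (synthetic_div P l) i - l * coeff (synthetic_div P l) (Suc i)"
    by (subst e, subst e2) simp
  show "poly P x = (x - l) * poly (synthetic_div P l) x"
    by (subst e) (simp add: algebra_simps)
qed

lemma sum_shift:
  fixes c :: complex
  assumes "i < m"
  shows "(\<Sum>j=i..m. c^(j-i) * w j) = w i + c * (\<Sum>j=Suc i..m. c^(j - Suc i) * w j)"
proof -
  have "(\<Sum>j=i..m. c^(j-i) * w j) = w i + (\<Sum>j=Suc i..m. c^(j-i) * w j)"
    using assms by (simp add: sum.atLeast_Suc_atMost)
  also have "(\<Sum>j=Suc i..m. c^(j-i) * w j) = c * (\<Sum>j=Suc i..m. c^(j - Suc i) * w j)"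
    unfolding sum_distrib_left
  proof (rule sum.cong)
    fix j assume "j \<in> {Suc i..m}"
    then have "j - i = Suc (j - Suc i)" by auto
    then show "c^(j-i) * w j = c * (c^(j - Suc i) * w j)" by simp
  qed simp
  finally show ?thesis .
qed

lemma Re_deriv:
  assumes "(p has_vector_derivative d) (at t)"
  shows "((\<lambda>s. Re (p s)) has_real_derivative Re d) (at t)"
  using bounded_linear.has_vector_derivative[OF bounded_linear_Re assms]
  by (simp add: has_real_derivative_iff_has_vector_derivative)

lemma Im_deriv:
  assumes "(p has_vector_derivative d) (at t)"
  shows "((\<lambda>s. Im (p s)) has_real_derivative Im d) (at t)"
  using bounded_linear.has_vector_derivative[OF bounded_linear_Im assms]
  by (simp add: has_real_derivative_iff_has_vector_derivative)

lemma scalar_stable: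
  fixes p F :: "real \<Rightarrow> complex" and l :: complex
  assumes der: "\<And>t. t > 0 \<Longrightarrow> (p has_vector_derivative (l * p t + F t)) (at t)"
    and Rl: "Re l < 0"
    and F: "(F \<longlongrightarrow> 0) at_top"
  shows "(p \<longlongrightarrow> 0) at_top"
proof (rule tendstoI)
  fix e :: real assume e: "e > 0"
  define m where "m = - Re l"
  have m: "m > 0" using Rl m_def by simp
  define V where "V t = (Re (p t))^2 + (Im (p t))^2" for t
  define K where "K = m * e^2 / 2"
  have Km: "K / m = e^2 / 2" using m by (simp add: K_def)
  have Km0: "0 \<le> K / m" unfolding Km by simp
  have "\<forall>\<^sub>F t in at_top. dist (F t) 0 < m * e / 2"
    using tendstoD[OF F, of "m * e / 2"] m e by simp
  then obtain T0 where T0: "\<And>t. t \<ge> T0 \<Longrightarrow> cmod (F t) < m * e / 2"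
    by (auto simp: eventually_at_top_linorder)
  define T where "T = max T0 1"
  have Vder: "(V has_real_derivative 2 * (Re (p t) * Re (l * p t + F t) + Im (p t) * Im (l * p t + F t))) (at t)"
    if "t > 0" for t
  proof -
    have d: "(p has_vector_derivative (l * p t + F t)) (at t)" using der that by auto
    show ?thesis unfolding V_def
      by (rule derivative_eq_intros Re_deriv[OF d] Im_deriv[OF d] refl)+ simp
  qed
  have Vle: "2 * (Re (p t) * Re (l * p t + F t) + Im (p t) * Im (l * p t + F t)) \<le> - m * V t + K"
    if "t \<ge> T" for t
  proof -
    have cF: "cmod (F t) < m * e / 2" using T0 that T_def by auto
    have eq: "Re (p t) * Re (l * p t + F t) + Im (p t) * Im (l * p t + F t)
       = Re l * V t + (Re (p t) * Re (F t) + Im (p t) * Im (F t))"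
      by (simp add: V_def algebra_simps power2_eq_square)
    have cs: "Re (p t) * Re (F t) + Im (p t) * Im (F t) \<le> cmod (p t) * cmod (F t)"
      using norm_cauchy_schwarz[of "p t" "F t"] by (simp add: inner_complex_def)
    have Vn: "V t = (cmod (p t))^2" by (simp add: V_def cmod_def)
    have "2 * (cmod (p t) * cmod (F t)) \<le> m * (cmod (p t))^2 + (cmod (F t))^2 / m"
    proof -
      have "0 \<le> (m * cmod (p t) - cmod (F t))^2 / m" using m by simp
      then show ?thesis using m by (simp add: field_simps power2_eq_square)
    qed
    moreover have "(cmod (F t))^2 / m \<le> K"
    proof -
      have "(cmod (F t))^2 \<le> (m * e / 2)^2" using cF by (intro power_mono) auto
      also have "\<dots> = (m * e)^2 / 4" by (simp add: power_divide)
      also have "\<dots> \<le> (m * e)^2 / 2" by simp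
      also have "\<dots> = m * K" unfolding K_def by (simp add: power2_eq_square)
      finally show ?thesis using m by (simp add: divide_le_eq mult.commute)
    qed
    ultimately show ?thesis using eq cs Vn m_def by (simp add: algebra_simps)
  qed
  define U where "U t = exp (m * t) * (V t - K / m)" for t
  have Umono: "U t \<le> U T" if "t \<ge> T" for t
  proof (rule DERIV_nonpos_imp_nonincreasing[OF that])
    fix x assume x: "T \<le> x" "x \<le> t"
    have x0: "x > 0" using x T_def by auto
    let ?D = "2 * (Re (p x) * Re (l * p x + F x) + Im (p x) * Im (l * p x + F x))"
    have "(U has_real_derivative (m * exp (m * x) * (V x - K / m) + exp (m * x) * ?D)) (at x)"
      unfolding U_def
      by (rule derivative_eq_intros Vder[OF x0] refl)+ (simp add: algebra_simps)
    moreover have "m * exp (m * x) * (V x - K / m) + exp (m * x) * ?D \<le> 0"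
    proof -
      have "m * exp (m * x) * (V x - K / m) + exp (m * x) * ?D
          = exp (m * x) * (m * V x - K + ?D)" using m by (simp add: field_simps)
      moreover have "m * V x - K + ?D \<le> 0" using Vle[OF x(1)] by linarith
      ultimately show ?thesis by (simp add: mult_nonneg_nonpos)
    qed
    ultimately show "\<exists>y. (U has_real_derivative y) (at x) \<and> y \<le> 0" by blast
  qed
  have lim: "((\<lambda>t. exp (m * (T - t)) * V T) \<longlongrightarrow> 0) at_top"
  proof -
    have "((\<lambda>t. exp (m * (T - t))) \<longlongrightarrow> 0) at_top"
      using m by real_asymp
    then show ?thesis by (simp add: tendsto_mult_left_zero)
  qed
  have ev1: "\<forall>\<^sub>F t in at_top. exp (m * (T - t)) * V T < e^2 / 2"
    using tendstoD[OF lim, of "e^2/2"] e by (auto elim: eventually_mono)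
  have ev2: "\<forall>\<^sub>F t in at_top. t \<ge> T" by (rule eventually_ge_at_top)
  show "\<forall>\<^sub>F t in at_top. dist (p t) 0 < e"
    using ev1 ev2
  proof eventually_elim
    case (elim t)
    have "U t \<le> U T" using Umono elim(2) .
    then have "exp (m * t) * (V t - K / m) \<le> exp (m * T) * (V T - K / m)" by (simp add: U_def)
    then have "V t - K / m \<le> exp (m * T) * (V T - K / m) / exp (m * t)"
      by (simp add: field_simps)
    also have "\<dots> = exp (m * (T - t)) * (V T - K / m)"
      unfolding right_diff_distrib exp_diff by (simp add: diff_divide_distrib)
    also have "\<dots> \<le> exp (m * (T - t)) * V T"
      using Km0 by (intro mult_left_mono) auto
    finally have "V t < e^2" using elim(1) Km by simp
    then have "(cmod (p t))^2 < e^2" by (simp add: V_def cmod_def)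
    then show ?case using e by (simp add: power_less_imp_less_base)
  qed
qed

lemma observer_stable:
  fixes z f :: "nat \<Rightarrow> real \<Rightarrow> complex" and a :: "nat \<Rightarrow> complex"
  assumes "n \<ge> 1"
    and "\<forall>\<mu>. poly (cpoly n a) \<mu> = 0 \<longrightarrow> Re \<mu> < 0"
    and "\<forall>i<n. \<forall>t>0. (z i has_vector_derivative
            ((if i = 0 then 0 else z (i-1) t) - a i * z (n-1) t + f i t)) (at t)"
    and "\<forall>i<n. (f i \<longlongrightarrow> 0) at_top"
  shows "(z (n-1) \<longlongrightarrow> 0) at_top"
  using assms
proof (induction n arbitrary: a z f)
  case 0
  then show ?case by simp
next
  case (Suc m)
  note roots = Suc.prems(2) and der = Suc.prems(3) and lim = Suc.prems(4)
  define P where "P = cpoly (Suc m) a"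
  obtain l where l: "poly P l = 0" using cpoly_root_exists[of "Suc m" a] P_def by auto
  have Rl: "Re l < 0" using roots l P_def by auto
  define Q where "Q = synthetic_div P l"
  define q where "q i = coeff Q i" for i
  have degQ: "degree Q = m" unfolding Q_def degree_synthetic_div P_def degree_cpoly by simp
  have qm: "q m = 1"
  proof -
    have "coeff P (Suc m) = q m - l * q (Suc m)"
      using synth_facts(2)[OF l] unfolding q_def Q_def by simp
    moreover have "q (Suc m) = 0" unfolding q_def using degQ by (simp add: coeff_eq_0)
    ultimately show ?thesis by (simp add: P_def coeff_cpoly)
  qed
  have a0: "a 0 = - l * q 0"
    using synth_facts(1)[OF l] unfolding q_def Q_def P_def by (simp add: coeff_cpoly)
  have aS: "a (Suc i) = q i - l * q (Suc i)" if "Suc i < Suc m" for i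
    using synth_facts(2)[OF l, of i] that unfolding q_def Q_def P_def by (simp add: coeff_cpoly)
  have am: "a m = (if m = 0 then - l else q (m - 1) - l)"
    using a0 aS[of "m - 1"] qm by (cases m) auto
  define y where "y = z m"
  define Z where "Z i t = (\<Sum>j=i..m. l^(j-i) * z j t)" for i t
  define G where "G i t = (\<Sum>j=i..m. l^(j-i) * f j t)" for i t
  have Zm: "Z m = z m" by (rule ext) (simp add: Z_def)
  have Gm: "G m t = f m t" for t by (simp add: G_def)
  have Zs: "Z i = (\<lambda>t. z i t + l * Z (Suc i) t)" if "i < m" for i
    by (rule ext) (simp add: Z_def sum_shift[OF that])
  have Gs: "G i t = f i t + l * G (Suc i) t" if "i < m" for i t
    by (simp add: G_def sum_shift[OF that])
  have Zder: "(Z i has_vector_derivative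
      ((if i = 0 then l * Z 0 t else Z (i-1) t) - (if i = 0 then 0 else q (i-1)) * y t + G i t)) (at t)"
    if "i \<le> m" "t > 0" for i t
  proof -
    have "\<forall>i. i \<le> m \<longrightarrow> m - i = k \<longrightarrow> (Z i has_vector_derivative
      ((if i = 0 then l * Z 0 t else Z (i-1) t) - (if i = 0 then 0 else q (i-1)) * y t + G i t)) (at t)" for k
    proof (induction k)
      case 0
      show ?case
      proof (intro allI impI)
        fix i assume i: "i \<le> m" "m - i = 0"
        then have im: "i = m" by simp
        have d: "(z m has_vector_derivative ((if m = 0 then 0 else z (m-1) t) - a m * z m t + f m t)) (at t)"
          using der \<open>t > 0\<close> by simp
        show "(Z i has_vector_derivative
          ((if i = 0 then l * Z 0 t else Z (i-1) t) - (if i = 0 then 0 else q (i-1)) * y t + G i t)) (at t)"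
        proof (cases "m = 0")
          case True
          then show ?thesis using d im am Zm Gm y_def by (simp add: algebra_simps)
        next
          case False
          have m1: "m-1 < m" "Suc (m-1) = m" using False by auto
          have "Z (m-1) t = z (m-1) t + l * z m t"
            by (simp only: Zs[OF m1(1)] m1(2) Zm)
          then show ?thesis using d im am Zm Gm y_def False by (simp add: algebra_simps)
        qed
      qed
    next
      case (Suc k)
      show ?case
      proof (intro allI impI)
        fix i assume i: "i \<le> m" "m - i = Suc k"
        then have im: "i < m" by simp
        have IH: "(Z (Suc i) has_vector_derivative (Z i t - q i * y t + G (Suc i) t)) (at t)"
        proof -
          have "(Z (Suc i) has_vector_derivative ((if Suc i = 0 then l * Z 0 t else Z (Suc i - 1) t)
             - (if Suc i = 0 then 0 else q (Suc i - 1)) * y t + G (Suc i) t)) (at t)"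
            by (rule Suc.IH[rule_format]) (use i in auto)
          then show ?thesis by (simp only: diff_Suc_1 Suc_not_Zero if_False)
        qed
        have d: "(z i has_vector_derivative ((if i = 0 then 0 else z (i-1) t) - a i * z m t + f i t)) (at t)"
          using der \<open>t > 0\<close> im by simp
        have dd: "(Z i has_vector_derivative
            (((if i = 0 then 0 else z (i-1) t) - a i * z m t + f i t) + l * (Z i t - q i * y t + G (Suc i) t))) (at t)"
        proof -
          have "((\<lambda>t. z i t + l * Z (Suc i) t) has_vector_derivative
            (((if i = 0 then 0 else z (i-1) t) - a i * z m t + f i t) + l * (Z i t - q i * y t + G (Suc i) t))) (at t)"
            by (intro derivative_intros d IH)
          then show ?thesis by (simp only: Zs[OF im, symmetric])
        qed
        show "(Z i has_vector_derivative
          ((if i = 0 then l * Z 0 t else Z (i-1) t) - (if i = 0 then 0 else q (i-1)) * y t + G i t)) (at t)"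
        proof (cases "i = 0")
          case True
          have "Z 0 t = z 0 t + l * Z 1 t" using Zs[OF im] True by simp
          then show ?thesis using dd True a0 Gs[OF im, of t] y_def by (simp add: algebra_simps)
        next
          case False
          have i1: "i - 1 < m" using im by simp
          have "Z (i-1) t = z (i-1) t + l * Z i t" using Zs[OF i1] False by simp
          moreover have "q (i-1) = a i + l * q i" using aS[of "i-1"] False im by simp
          ultimately show ?thesis using dd False Gs[OF im, of t] y_def by (simp add: algebra_simps)
        qed
      qed
    qed
    then show ?thesis using that by blast
  qed
  have Glim: "(G i \<longlongrightarrow> 0) at_top" for i
    unfolding G_def[abs_def]
    by (intro tendsto_null_sum tendsto_mult_right_zero) (use lim in auto)
  have plim: "(Z 0 \<longlongrightarrow> 0) at_top"
  proof (rule scalar_stable[OF _ Rl Glim[of 0]])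
    fix t :: real assume "t > 0"
    then show "(Z 0 has_vector_derivative l * Z 0 t + G 0 t) (at t)" using Zder[of 0 t] by simp
  qed
  show ?case
  proof (cases "m = 0")
    case True
    then show ?thesis using plim Zm by simp
  next
    case False
    define z' where "z' i = Z (Suc i)" for i
    define f' where "f' i t = (if i = 0 then Z 0 t else 0) + G (Suc i) t" for i t
    have cQ: "cpoly m q = Q"
      by (rule poly_eqI) (use qm in \<open>auto simp: coeff_cpoly q_def degQ coeff_eq_0\<close>)
    have "(z' (m-1) \<longlongrightarrow> 0) at_top"
    proof (rule Suc.IH)
      show "1 \<le> m" using False by simp
      show "\<forall>\<mu>. poly (cpoly m q) \<mu> = 0 \<longrightarrow> Re \<mu> < 0"
        using roots synth_facts(3)[OF l] unfolding cQ Q_def P_def by auto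
      show "\<forall>i<m. (f' i \<longlongrightarrow> 0) at_top"
      proof (intro allI impI)
        fix i assume "i < m"
        have "((\<lambda>t. if i = 0 then Z 0 t else 0) \<longlongrightarrow> 0) at_top"
          using plim by (cases "i = 0") auto
        then show "(f' i \<longlongrightarrow> 0) at_top"
          unfolding f'_def[abs_def] using Glim by (intro tendsto_add_zero)
      qed
      have zm: "z' (m-1) = y" using False Zm y_def unfolding z'_def by simp
      show "\<forall>i<m. \<forall>t>0. (z' i has_vector_derivative
            ((if i = 0 then 0 else z' (i-1) t) - q i * z' (m-1) t + f' i t)) (at t)"
      proof (intro allI impI)
        fix i t assume i: "i < m" and t: "(t::real) > 0"
        have "(Z (Suc i) has_vector_derivative (Z i t - q i * y t + G (Suc i) t)) (at t)"
          using Zder[of "Suc i" t] i t by simp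
        then show "(z' i has_vector_derivative
            ((if i = 0 then 0 else z' (i-1) t) - q i * z' (m-1) t + f' i t)) (at t)"
          unfolding zm z'_def f'_def by (cases i) (use False Zm y_def in \<open>auto simp: algebra_simps\<close>)
      qed
    qed
    then show ?thesis using False Zm unfolding z'_def by simp
  qed
qed

lemma obs_mult:
  fixes c :: "nat \<Rightarrow> 'a::comm_ring_1" and w :: "'a vec"
  assumes "dim_vec w = n" "i < n"
  shows "(mat n n (\<lambda>(i,j). if j = n-1 then - c i else if i = j+1 then 1 else 0) *\<^sub>v w) $ i
         = (if i = 0 then 0 else w $ (i-1)) - c i * w $ (n-1)"
proof -
  have "(mat n n (\<lambda>(i,j). if j = n-1 then - c i else if i = j+1 then 1 else 0) *\<^sub>v w) $ i
     = (\<Sum>j\<in>{0..<n}. (if j = n-1 then - c i else if i = j+1 then 1 else 0) * w $ j)"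
    using assms by (simp add: scalar_prod_def)
  also have "\<dots> = (\<Sum>j\<in>{0..<n}. (if j = n-1 then - c i * w $ j else 0) + (if 0 < i \<and> j = i - 1 then w $ j else 0))"
    using assms by (intro sum.cong) auto
  also have "\<dots> = (if i = 0 then 0 else w $ (i-1)) - c i * w $ (n-1)"
    using assms by (simp add: sum.distrib)
  finally show ?thesis .
qed

lemma cpoly_synth:
  assumes n: "n \<ge> 1" and l: "poly (cpoly n c) l = 0"
  shows "coeff (synthetic_div (cpoly n c) l) (n-1) = 1"
    and "c 0 = - l * coeff (synthetic_div (cpoly n c) l) 0"
    and "Suc i < n \<Longrightarrow> c (Suc i) = coeff (synthetic_div (cpoly n c) l) i - l * coeff (synthetic_div (cpoly n c) l) (Suc i)"
proof -
  define Q where "Q = synthetic_div (cpoly n c) l"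
  have degQ: "degree Q = n - 1" unfolding Q_def degree_synthetic_div degree_cpoly by simp
  have "coeff (cpoly n c) (Suc (n-1)) = coeff Q (n-1) - l * coeff Q (Suc (n-1))"
    using synth_facts(2)[OF l] unfolding Q_def by simp
  moreover have "coeff Q (Suc (n-1)) = 0" using degQ by (simp add: coeff_eq_0)
  ultimately show "coeff (synthetic_div (cpoly n c) l) (n-1) = 1"
    using n by (simp add: coeff_cpoly Q_def)
  show "c 0 = - l * coeff (synthetic_div (cpoly n c) l) 0"
    using synth_facts(1)[OF l] n by (simp add: coeff_cpoly)
  show "Suc i < n \<Longrightarrow> c (Suc i) = coeff (synthetic_div (cpoly n c) l) i - l * coeff (synthetic_div (cpoly n c) l) (Suc i)"
    using synth_facts(2)[OF l, of i] by (simp add: coeff_cpoly)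
qed

lemma hurwitz_roots:
  assumes n: "n \<ge> 1" and H: "hurwitz (obs_A n a)"
  shows "\<forall>\<mu>. poly (cpoly n (\<lambda>i. complex_of_real (a i))) \<mu> = 0 \<longrightarrow> Re \<mu> < 0"
proof (intro allI impI)
  fix \<mu> assume r: "poly (cpoly n (\<lambda>i. complex_of_real (a i))) \<mu> = 0"
  define c where "c i = complex_of_real (a i)" for i
  define q where "q i = coeff (synthetic_div (cpoly n c) \<mu>) i" for i
  have r': "poly (cpoly n c) \<mu> = 0" using r unfolding c_def[abs_def] .
  note S = cpoly_synth[OF n r', folded q_def]
  define M where "M = map_mat complex_of_real (obs_A n a)"
  have M: "M = mat n n (\<lambda>(i,j). if j = n-1 then - c i else if i = j+1 then 1 else 0)"
    unfolding M_def obs_A_def c_def by (rule eq_matI) auto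
  define v where "v = vec n q"
  have "eigenvector M v \<mu>"
    unfolding eigenvector_def
  proof (intro conjI)
    show "v \<in> carrier_vec (dim_row M)" by (simp add: M v_def)
    have "v $ (n-1) = 1" using n S(1) by (simp add: v_def)
    then show "v \<noteq> 0\<^sub>v (dim_row M)" using n by (auto simp: M)
    show "M *\<^sub>v v = \<mu> \<cdot>\<^sub>v v"
    proof (rule eq_vecI)
      fix i assume "i < dim_vec (\<mu> \<cdot>\<^sub>v v)"
      then have i: "i < n" by (simp add: v_def)
      have "(M *\<^sub>v v) $ i = (if i = 0 then 0 else v $ (i-1)) - c i * v $ (n-1)"
        unfolding M by (rule obs_mult) (simp_all add: v_def i)
      also have "\<dots> = \<mu> * v $ i"
      proof (cases i)
        case 0
        then show ?thesis using S(1) S(2) n i by (simp add: v_def)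
      next
        case (Suc k)
        then show ?thesis using S(1) S(3)[of k] n i by (simp add: v_def)
      qed
      finally show "(M *\<^sub>v v) $ i = (\<mu> \<cdot>\<^sub>v v) $ i" using i by (simp add: v_def)
    qed (simp add: M v_def)
  qed
  then have "eigenvalue M \<mu>" unfolding eigenvalue_def by blast
  then show "Re \<mu> < 0" using H unfolding hurwitz_def M_def by blast
qed

theorem mainTheorem1:
  fixes n :: nat and a b :: "nat \<Rightarrow> real"
  assumes "n \<ge> 1"
    and "hurwitz (obs_A n a)"
    and "b 0 / a 0 > 0"
  shows "\<forall>\<xi> x. \<xi> \<in> carrier_vec n \<longrightarrow> is_solution n (obs_A n a) (obs_B n b) \<xi> x
           \<longrightarrow> tau_plus (obs_C n) x < \<infinity>"
proof (intro allI impI)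
  fix \<xi> x assume xi: "\<xi> \<in> carrier_vec n" and sol: "is_solution n (obs_A n a) (obs_B n b) \<xi> x"
  have a0: "a 0 \<noteq> 0" using assms(3) by auto
  define ys where "ys = - (b 0 / a 0)"
  have ys: "ys < 0" using assms(3) by (simp add: ys_def)
  have a0ys: "a 0 * ys = - b 0" using a0 by (simp add: ys_def)
  define xs where "xs i = (if i = n-1 then ys else a (Suc i) * ys + b (Suc i))" for i
  define z where "z i t = complex_of_real (x t $ i - xs i)" for i t
  have dimx: "dim_vec (x t) = n" if "t \<ge> 0" for t using sol that unfolding is_solution_def by auto
  have dx: "((\<lambda>s. x s $ i) has_real_derivative
      ((if i = 0 then 0 else x t $ (i-1)) - a i * x t $ (n-1) - b i)) (at t)" if i: "i < n" and t: "t > 0" for i t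
  proof -
    have d0: "((\<lambda>s. x s $ i) has_real_derivative ((obs_A n a *\<^sub>v x t) $ i - obs_B n b $ i)) (at t within {0..})"
      using sol i t unfolding is_solution_def by auto
    have e1: "(obs_A n a *\<^sub>v x t) $ i = (if i = 0 then 0 else x t $ (i-1)) - a i * x t $ (n-1)"
      unfolding obs_A_def by (rule obs_mult) (use dimx i t in auto)
    have e2: "obs_B n b $ i = b i" using i by (simp add: obs_B_def)
    have h: "((\<lambda>s. x s $ i) has_real_derivative
      ((if i = 0 then 0 else x t $ (i-1)) - a i * x t $ (n-1) - b i)) (at t within {0<..})"
      by (rule has_field_derivative_subset[OF d0[unfolded e1 e2]]) auto
    have ee: "at t within {0<..} = at t" using t by (intro at_within_open) auto
    show ?thesis using h[unfolded ee] .
  qed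
  have dz: "\<forall>i<n. \<forall>t>0. (z i has_vector_derivative
      ((if i = 0 then 0 else z (i-1) t) - complex_of_real (a i) * z (n-1) t + 0)) (at t)"
  proof (intro allI impI)
    fix i t assume i: "i < n" and t: "(t::real) > 0"
    have "((\<lambda>s. x s $ i - xs i) has_real_derivative
      ((if i = 0 then 0 else x t $ (i-1)) - a i * x t $ (n-1) - b i)) (at t)"
      using DERIV_diff[OF dx[OF i t] DERIV_const[of "xs i"]] by simp
    then have d: "(z i has_vector_derivative complex_of_real
      ((if i = 0 then 0 else x t $ (i-1)) - a i * x t $ (n-1) - b i)) (at t)"
      unfolding z_def[abs_def] by (rule has_vector_derivative_of_real)
    have key: "(if i = 0 then 0 else x t $ (i-1)) - a i * x t $ (n-1) - b i
       = (if i = 0 then 0 else x t $ (i-1) - xs (i-1)) - a i * (x t $ (n-1) - xs (n-1))"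
    proof (cases i)
      case 0
      then show ?thesis using a0ys by (simp add: xs_def algebra_simps)
    next
      case (Suc k)
      then have "k \<noteq> n - 1" using i by simp
      then show ?thesis using Suc by (simp add: xs_def algebra_simps)
    qed
    show "(z i has_vector_derivative
      ((if i = 0 then 0 else z (i-1) t) - complex_of_real (a i) * z (n-1) t + 0)) (at t)"
      using d unfolding key by (cases "i = 0") (simp_all add: z_def)
  qed
  have "(z (n-1) \<longlongrightarrow> 0) at_top"
    by (rule observer_stable[where f = "\<lambda>i t. 0", OF assms(1) hurwitz_roots[OF assms(1,2)] dz]) simp
  then have "((\<lambda>t. Re (z (n-1) t)) \<longlongrightarrow> Re 0) at_top" by (rule tendsto_Re)
  then have lim: "((\<lambda>t. x t $ (n-1) - ys) \<longlongrightarrow> 0) at_top" by (simp add: z_def xs_def)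
  have "\<forall>\<^sub>F t in at_top. dist (x t $ (n-1) - ys) 0 < - ys" using tendstoD[OF lim] ys by simp
  moreover have "\<forall>\<^sub>F t in at_top. (1::real) \<le> t" by (rule eventually_ge_at_top)
  ultimately have "\<forall>\<^sub>F t in at_top. 1 \<le> t \<and> x t $ (n-1) < 0"
    by eventually_elim auto
  then obtain N where N: "\<And>t. t \<ge> N \<Longrightarrow> 1 \<le> t \<and> x t $ (n-1) < 0"
    unfolding eventually_at_top_linorder by blast
  then have t: "1 \<le> N" "x N $ (n-1) < 0" by auto
  have xc: "x N \<in> carrier_vec n" proof (rule carrier_vecI, rule dimx)
    show "0 \<le> N" using t(1) by linarith
  qed
  have n1: "n - 1 < n" using assms(1) by simp
  have "obs_C n \<bullet> x N = x N $ (n-1)"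
    unfolding obs_C_def by (rule scalar_prod_left_unit[OF xc n1])
  then have "ereal N \<in> {ereal t | t. t > 0 \<and> obs_C n \<bullet> x t < 0}" using t by auto
  then have "tau_plus (obs_C n) x \<le> ereal N" unfolding tau_plus_def by (rule Inf_lower)
  moreover have "ereal N < \<infinity>" by simp
  ultimately show "tau_plus (obs_C n) x < \<infinity>" by (rule le_less_trans)
qed

end
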